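(* Let $\rho<r<1$. If $\mathcal{D},\mathcal{D}'\in\mathcal{M}$ and $\lambda,\lambda'>0$ satisfy $\mathcal{R}_r\mathcal{D}=\lambda\mathcal{D}$ and $\mathcal{R}_r\mathcal{D}'=\lambda'\mathcal{D}'$, then $\lambda=\lambda'$.
   Context: Let $q_0=(\tfrac12,\tfrac{\sqrt3}{2})$, $q_1=(0,0)$, $q_2=(1,0)$, $\rho=\frac{\sqrt5-1}{2}$, $F_0(x)=\rho^2(x-q_0)+q_0$, $F_1(x)=\rho(x-q_1)+q_1$, $F_2(x)=\rho(x-q_2)+q_2$. For a finite word $w$ over $\{0,1,2\}$, $|w|$ is its length and $F_w=F_{w_1}\circ\cdots\circ F_{w_{|w|}}$. $W_1$ is a set of words of the form $w_1\cdots w_n0$ ($n\ge0$, $w_i\in\{1,2\}$) containing exactly one word for each distinct map $F_w$ of this form. $V_0=\{q_0,q_1,q_2\}$, $V_1=\bigcup_{w\in W_1}F_wV_0$, $\bar V_1$ its closure. $\mathcal{M}$ is the set of forms $\mathcal{D}(f,g)=\frac12\sum_{i,j}a_{ij}(f(q_i)-f(q_j))(g(q_i)-g(q_j))$ on functions on $V_0$ with $(a_{ij})$ symmetric, $a_{ii}=0$, $a_{ij}\ge0$ and irreducible. $\Psi_r\mathcal{D}(f,g)=\sum_{w\in W_1}r^{-|w|+1}\mathcal{D}(f\circ F_w,g\circ F_w)$ on $\mathrm{Dom}(\Psi_r\mathcal{D})=\{f:V_1\to\mathbb{R}:\Psi_r\mathcal{D}(f,f)<\infty\}$, and for $\rho<r<1$,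 $\mathcal{R}_r\mathcal{D}(u)=\inf\{\Psi_r\mathcal{D}(f):f\in\mathrm{Dom}(\Psi_r\mathcal{D}),f|_{V_0}=u\}$ for $u:V_0\to\mathbb{R}$. *)

theory Defs
  imports "HOL-Analysis.Analysis"
begin

text \<open>Points of the plane are modelled as complex numbers.\<close>

definition rho :: real where "rho = (sqrt 5 - 1) / 2"

definition q :: "nat \<Rightarrow> complex" where
  "q i = (if i = 0 then Complex (1/2) (sqrt 3 / 2) else if i = 1 then 0 else 1)"

definition Fi :: "nat \<Rightarrow> complex \<Rightarrow> complex" where
  "Fi i x = complex_of_real (if i = 0 then rho^2 else rho) * (x - q i) + q i"

definition Fw :: "nat list \<Rightarrow> complex \<Rightarrow> complex" where
  "Fw w = foldr (\<lambda>i g. Fi i \<circ> g) w id"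

definition V0 :: "complex set" where "V0 = {q 0, q 1, q 2}"

definition words0 :: "nat list set" where
  "words0 = {w @ [0] | w. set w \<subseteq> {1, 2}}"

definition is_W1 :: "nat list set \<Rightarrow> bool" where
  "is_W1 W \<longleftrightarrow> W \<subseteq> words0 \<and> (\<forall>w\<in>words0. \<exists>!v. v \<in> W \<and> Fw v = Fw w)"

definition V1 :: "nat list set \<Rightarrow> complex set" where
  "V1 W = (\<Union>w\<in>W. Fw w ` V0)"

definition form_of :: "(nat \<Rightarrow> nat \<Rightarrow> real) \<Rightarrow> (complex \<Rightarrow> real) \<Rightarrow> (complex \<Rightarrow> real) \<Rightarrow> real" where
  "form_of a f g = 1/2 * (\<Sum>i<3. \<Sum>j<3. a i j * (f (q i) - f (q j)) * (g (q i) - g (q j)))"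

definition irreducible3 :: "(nat \<Rightarrow> nat \<Rightarrow> real) \<Rightarrow> bool" where
  "irreducible3 a \<longleftrightarrow> (\<forall>i<3. \<forall>j<3. i \<noteq> j \<longrightarrow>
      (i, j) \<in> {(k, l). k < 3 \<and> l < 3 \<and> a k l > 0}\<^sup>+)"

definition M :: "((complex \<Rightarrow> real) \<Rightarrow> (complex \<Rightarrow> real) \<Rightarrow> real) set" where
  "M = {form_of a | a. (\<forall>i<3. \<forall>j<3. a i j = a j i) \<and> (\<forall>i<3. a i i = 0)
          \<and> (\<forall>i<3. \<forall>j<3. a i j \<ge> 0) \<and> irreducible3 a}"

definition Psi_term :: "real \<Rightarrow> ((complex \<Rightarrow> real) \<Rightarrow> (complex \<Rightarrow> real) \<Rightarrow> real)
    \<Rightarrow> (complex \<Rightarrow> real) \<Rightarrow> nat list \<Rightarrow> real" where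
  "Psi_term r D f w = r powi (1 - int (length w)) * D (f \<circ> Fw w) (f \<circ> Fw w)"

definition Psi :: "nat list set \<Rightarrow> real \<Rightarrow> ((complex \<Rightarrow> real) \<Rightarrow> (complex \<Rightarrow> real) \<Rightarrow> real)
    \<Rightarrow> (complex \<Rightarrow> real) \<Rightarrow> real" where
  "Psi W r D f = (\<Sum>\<^sub>\<infinity>w\<in>W. Psi_term r D f w)"

text \<open>Dom(Psi_r D): finite energy (terms are nonnegative, so this is Psi_r D(f) < infinity).
  The restriction f|V0 is understood via the continuous extension to the closure of V1.\<close>
definition in_Dom :: "nat list set \<Rightarrow> real \<Rightarrow> ((complex \<Rightarrow> real) \<Rightarrow> (complex \<Rightarrow> real) \<Rightarrow> real)
    \<Rightarrow> (complex \<Rightarrow> real) \<Rightarrow> bool" where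
  "in_Dom W r D f \<longleftrightarrow> Psi_term r D f summable_on W \<and> continuous_on (closure (V1 W)) f"

definition RR :: "nat list set \<Rightarrow> real \<Rightarrow> ((complex \<Rightarrow> real) \<Rightarrow> (complex \<Rightarrow> real) \<Rightarrow> real)
    \<Rightarrow> (complex \<Rightarrow> real) \<Rightarrow> ereal" where
  "RR W r D u = (INF f \<in> {f. in_Dom W r D f \<and> (\<forall>x\<in>V0. f x = u x)}. ereal (Psi W r D f))"

end

theory Submission
  imports Defs
begin

lemma mono_RR:
  assumes r: "r > 0" and nn: "\<forall>g. 0 \<le> D g g" and k: "k > 0"
    and le: "\<forall>g. D g g \<le> k * D' g g"
    and A: "RR W r D u = ereal A" and B: "RR W r D' u = ereal B"
  shows "A \<le> k * B"
proof -
  have "ereal (A / k) \<le> RR W r D' u"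
    unfolding RR_def
  proof (rule INF_greatest)
    fix f assume "f \<in> {f. in_Dom W r D' f \<and> (\<forall>x\<in>V0. f x = u x)}"
    then have dom: "in_Dom W r D' f" and agree: "\<forall>x\<in>V0. f x = u x" by auto
    have pw: "r powi (1 - int (length w)) > 0" for w using r by simp
    have t1: "Psi_term r D f w \<le> k * Psi_term r D' f w" for w
      unfolding Psi_term_def using pw[of w] le
      by (metis mult.left_commute mult_left_mono less_imp_le)
    have t0: "0 \<le> Psi_term r D f w" for w
      unfolding Psi_term_def using pw[of w] nn by simp
    have s': "Psi_term r D' f summable_on W" using dom unfolding in_Dom_def by simp
    have sk: "(\<lambda>w. k * Psi_term r D' f w) summable_on W"
      by (rule summable_on_cmult_right[OF s'])
    have s: "Psi_term r D f summable_on W"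
      by (rule summable_on_comparison_test[OF sk]) (use t1 t0 in auto)
    have domD: "in_Dom W r D f" using dom s unfolding in_Dom_def by simp
    have "RR W r D u \<le> ereal (Psi W r D f)"
      unfolding RR_def by (rule INF_lower) (use domD agree in auto)
    then have "A \<le> Psi W r D f" using A by simp
    also have "Psi W r D f \<le> infsum (\<lambda>w. k * Psi_term r D' f w) W"
      unfolding Psi_def by (rule infsum_mono[OF s sk]) (use t1 in auto)
    also have "\<dots> = k * Psi W r D' f"
      unfolding Psi_def by (rule infsum_cmult_right') 
    finally have "A / k \<le> Psi W r D' f" using k by (simp add: field_simps mult.commute)
    then show "ereal (A / k) \<le> ereal (Psi W r D' f)" by simp
  qed
  then have "A / k \<le> B" using B by simp
  then show ?thesis using k by (simp add: field_simps mult.commute)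
qed

lemma sq_tri: "((a::real) - c)^2 \<le> 2 * (a - b)^2 + 2 * (b - c)^2"
proof -
  have "0 \<le> (a - 2*b + c)^2" by simp
  then show ?thesis by (simp add: power2_eq_square algebra_simps)
qed

lemma key:
  fixes e1 e2 e3 y1 y2 y3 :: real
  assumes "e3 \<ge> 0" "y1 \<ge> 0" "y2 \<ge> 0" "y3 \<ge> 0" "e1 > 0" "e2 > 0" "y3 \<le> 2*(y1+y2)"
  shows "y1 + y2 + y3 \<le> 3 / min e1 e2 * (e1*y1 + e2*y2 + e3*y3)"
proof -
  let ?m = "min e1 e2"
  have m: "?m > 0" using assms by simp
  have a1: "?m * y1 \<le> e1*y1" using assms by (intro mult_right_mono) auto
  have a2: "?m * y2 \<le> e2*y2" using assms by (intro mult_right_mono) auto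
  have "?m * (y1 + y2) \<le> e1*y1 + e2*y2"
    using a1 a2 by (simp add: distrib_left)
  also have "\<dots> \<le> e1*y1 + e2*y2 + e3*y3" using assms by simp
  finally have h: "?m * (y1 + y2) \<le> e1*y1 + e2*y2 + e3*y3" .
  have "y1 + y2 + y3 \<le> 3 * (y1 + y2)" using assms by simp
  also have "\<dots> = 3 / ?m * (?m * (y1+y2))" using m by (simp add: field_simps less_imp_neq[OF m, symmetric])
  also have "\<dots> \<le> 3 / ?m * (e1*y1 + e2*y2 + e3*y3)"
    using h m by (intro mult_left_mono) auto
  finally show ?thesis .
qed

lemma form_expand:
  assumes sym: "\<forall>i<3. \<forall>j<3. a i j = a j i" and dg: "\<forall>i<3. a i i = 0"
  shows "form_of a g g = a 0 1 * (g (q 0) - g (q 1))^2 + a 0 2 * (g (q 0) - g (q 2))^2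
            + a 1 2 * (g (q 1) - g (q 2))^2"
proof -
  have s1: "a 1 0 = a 0 1" "a 2 0 = a 0 2" "a 2 1 = a 1 2" using sym by auto
  have d: "a 0 0 = 0" "a 1 1 = 0" "a 2 2 = 0" using dg by auto
  have e: "{..<3::nat} = {0,1,2}" by auto
  show ?thesis unfolding form_of_def e using s1 d
    by (simp add: power2_eq_square algebra_simps)
qed

lemma out_edge:
  assumes irr: "irreducible3 a" and i: "i < 3"
  shows "\<exists>c<3. a i c > 0"
proof -
  let ?j = "(i+1) mod 3"
  have "?j < 3" "i \<noteq> ?j" using i by presburger+
  then have "(i, ?j) \<in> {(k, l). k < 3 \<and> l < 3 \<and> a k l > 0}\<^sup>+"
    using irr i unfolding irreducible3_def by blast
  then show ?thesis
  proof (rule converse_tranclE)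
    assume "(i, ?j) \<in> {(k, l). k < 3 \<and> l < 3 \<and> a k l > 0}"
    then show ?thesis by blast
  next
    fix c assume "(i, c) \<in> {(k, l). k < 3 \<and> l < 3 \<and> a k l > 0}"
    then show ?thesis by blast
  qed
qed

lemma edges:
  assumes sym: "\<forall>i<3. \<forall>j<3. a i j = a j i" and dg: "\<forall>i<3. a i i = 0"
    and irr: "irreducible3 a"
  shows "(a 0 1 > 0 \<or> a 0 2 > 0) \<and> (a 0 1 > 0 \<or> a 1 2 > 0) \<and> (a 0 2 > 0 \<or> a 1 2 > 0)"
proof -
  have s1: "a 1 0 = a 0 1" "a 2 0 = a 0 2" "a 2 1 = a 1 2" using sym by auto
  have d: "a 0 0 = 0" "a 1 1 = 0" "a 2 2 = 0" using dg by auto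
  have c3: "c < 3 \<Longrightarrow> c = 0 \<or> c = 1 \<or> c = (2::nat)" for c by auto
  obtain c0 where "c0 < 3" "a 0 c0 > 0" using out_edge[OF irr, of 0] by auto
  then have h0: "a 0 1 > 0 \<or> a 0 2 > 0" using c3[of c0] d by auto
  obtain c1 where "c1 < 3" "a 1 c1 > 0" using out_edge[OF irr, of 1] by auto
  then have h1: "a 0 1 > 0 \<or> a 1 2 > 0" using c3[of c1] d s1 by auto
  obtain c2 where "c2 < 3" "a 2 c2 > 0" using out_edge[OF irr, of 2] by auto
  then have h2: "a 0 2 > 0 \<or> a 1 2 > 0" using c3[of c2] d s1 by auto
  show ?thesis using h0 h1 h2 by blast
qed

lemma lower_bound:
  fixes e1 e2 e3 :: real
  assumes "e1 \<ge> 0" "e2 \<ge> 0" "e3 \<ge> 0"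
    and "(e1 > 0 \<or> e2 > 0) \<and> (e1 > 0 \<or> e3 > 0) \<and> (e2 > 0 \<or> e3 > 0)"
  shows "\<exists>K>0. \<forall>x0 x1 x2::real. (x0-x1)^2 + (x0-x2)^2 + (x1-x2)^2
             \<le> K * (e1*(x0-x1)^2 + e2*(x0-x2)^2 + e3*(x1-x2)^2)"
proof -
  have t1: "(x1-x2)^2 \<le> 2*((x0-x1)^2 + (x0-x2)^2)" for x0 x1 x2 :: real
    using sq_tri[of x1 x2 x0] by (simp add: power2_commute[of x1 x0])
  have t2: "(x0-x2)^2 \<le> 2*((x0-x1)^2 + (x1-x2)^2)" for x0 x1 x2 :: real
    using sq_tri[of x0 x2 x1] by simp
  have t3: "(x0-x1)^2 \<le> 2*((x0-x2)^2 + (x1-x2)^2)" for x0 x1 x2 :: real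
    using sq_tri[of x0 x1 x2] by (simp add: power2_commute[of x2 x1])
  consider "e1 > 0" "e2 > 0" | "e1 > 0" "e3 > 0" | "e2 > 0" "e3 > 0" using assms(4) by blast
  then show ?thesis
  proof cases
    case 1
    show ?thesis
      apply (rule exI[of _ "3 / min e1 e2"]) using 1 assms
      using key[of e3 "(_-_)^2" "(_-_)^2" "(_-_)^2" e1 e2] t1 by auto
  next
    case 2
    show ?thesis
    proof (rule exI[of _ "3 / min e1 e3"], intro conjI allI)
      show "3 / min e1 e3 > 0" using 2 by simp
      fix x0 x1 x2 :: real
      have "(x0-x1)^2 + (x1-x2)^2 + (x0-x2)^2 \<le> 3 / min e1 e3 * (e1*(x0-x1)^2 + e3*(x1-x2)^2 + e2*(x0-x2)^2)"
        using key[of e2 "(x0-x1)^2" "(x1-x2)^2" "(x0-x2)^2" e1 e3] t2[of x0 x2 x1] 2 assms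
        by (simp add: t2)
      then show "(x0-x1)^2 + (x0-x2)^2 + (x1-x2)^2
             \<le> 3 / min e1 e3 * (e1*(x0-x1)^2 + e2*(x0-x2)^2 + e3*(x1-x2)^2)"
        by (simp add: algebra_simps)
    qed
  next
    case 3
    show ?thesis
    proof (rule exI[of _ "3 / min e2 e3"], intro conjI allI)
      show "3 / min e2 e3 > 0" using 3 by simp
      fix x0 x1 x2 :: real
      have "(x0-x2)^2 + (x1-x2)^2 + (x0-x1)^2 \<le> 3 / min e2 e3 * (e2*(x0-x2)^2 + e3*(x1-x2)^2 + e1*(x0-x1)^2)"
        using key[of e1 "(x0-x2)^2" "(x1-x2)^2" "(x0-x1)^2" e2 e3] t3[of x0 x1 x2] 3 assms
        by (simp add: t3)
      then show "(x0-x1)^2 + (x0-x2)^2 + (x1-x2)^2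
             \<le> 3 / min e2 e3 * (e1*(x0-x1)^2 + e2*(x0-x2)^2 + e3*(x1-x2)^2)"
        by (simp add: algebra_simps)
    qed
  qed
qed


lemma M_facts:
  assumes "D \<in> M"
  obtains a :: "nat \<Rightarrow> nat \<Rightarrow> real" where "\<And>g. D g g = a 0 1 * (g (q 0) - g (q 1))^2 + a 0 2 * (g (q 0) - g (q 2))^2
            + a 1 2 * (g (q 1) - g (q 2))^2"
    "a 0 1 \<ge> 0" "a 0 2 \<ge> 0" "a 1 2 \<ge> 0"
    "(a 0 1 > 0 \<or> a 0 2 > 0) \<and> (a 0 1 > 0 \<or> a 1 2 > 0) \<and> (a 0 2 > 0 \<or> a 1 2 > 0)"
proof -
  obtain a where D: "D = form_of a" and sym: "\<forall>i<3. \<forall>j<3. a i j = a j i"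
    and dg: "\<forall>i<3. a i i = 0" and nn: "\<forall>i<3. \<forall>j<3. a i j \<ge> 0" and irr: "irreducible3 a"
    using assms unfolding M_def by blast
  show ?thesis
    apply (rule that[of a])
    using form_expand[OF sym dg] D nn edges[OF sym dg irr] by auto
qed

lemma M_nonneg: "D \<in> M \<Longrightarrow> 0 \<le> D g g"
  by (erule M_facts) simp

lemma M_pos: assumes "D \<in> M" shows "\<exists>u. D u u > 0"
proof -
  obtain a :: "nat \<Rightarrow> nat \<Rightarrow> real" where e: "\<And>g. D g g = a 0 1 * (g (q 0) - g (q 1))^2 + a 0 2 * (g (q 0) - g (q 2))^2
            + a 1 2 * (g (q 1) - g (q 2))^2"
    and p: "a 0 1 \<ge> 0" "a 0 2 \<ge> 0" "a 1 2 \<ge> 0"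
    "(a 0 1 > 0 \<or> a 0 2 > 0)" using M_facts[OF assms] by metis
  have q: "q 0 \<noteq> q 1" "q 0 \<noteq> q 2" "q 1 \<noteq> q 2"
    unfolding q_def by (auto simp: complex_eq_iff)
  let ?u = "\<lambda>x. if x = q 0 then 1 else (0::real)"
  have "D ?u ?u = a 0 1 + a 0 2" using e[of ?u] q by simp
  then show ?thesis using p by (intro exI[of _ ?u]) auto
qed

lemma M_equiv:
  assumes "D \<in> M" "D' \<in> M"
  shows "\<exists>K>0. \<forall>g. D g g \<le> K * D' g g"
proof -
  obtain a :: "nat \<Rightarrow> nat \<Rightarrow> real" where e: "\<And>g. D g g = a 0 1 * (g (q 0) - g (q 1))^2 + a 0 2 * (g (q 0) - g (q 2))^2
            + a 1 2 * (g (q 1) - g (q 2))^2"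
    and p: "a 0 1 \<ge> 0" "a 0 2 \<ge> 0" "a 1 2 \<ge> 0" using M_facts[OF assms(1)] by metis
  obtain b :: "nat \<Rightarrow> nat \<Rightarrow> real" where e': "\<And>g. D' g g = b 0 1 * (g (q 0) - g (q 1))^2 + b 0 2 * (g (q 0) - g (q 2))^2
            + b 1 2 * (g (q 1) - g (q 2))^2"
    and p': "b 0 1 \<ge> 0" "b 0 2 \<ge> 0" "b 1 2 \<ge> 0"
    "(b 0 1 > 0 \<or> b 0 2 > 0) \<and> (b 0 1 > 0 \<or> b 1 2 > 0) \<and> (b 0 2 > 0 \<or> b 1 2 > 0)"
    using M_facts[OF assms(2)] by metis
  obtain K where K: "K > 0" and Kb: "\<forall>x0 x1 x2::real. (x0-x1)^2 + (x0-x2)^2 + (x1-x2)^2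
             \<le> K * (b 0 1*(x0-x1)^2 + b 0 2*(x0-x2)^2 + b 1 2*(x1-x2)^2)"
    using lower_bound[OF p'] by blast
  let ?S = "a 0 1 + a 0 2 + a 1 2 + 1"
  show ?thesis
  proof (rule exI[of _ "?S * K"], intro conjI allI)
    show "?S * K > 0" using K p by simp
    fix g :: "complex \<Rightarrow> real"
    define x0 where "x0 = g (q 0)"
    define x1 where "x1 = g (q 1)"
    define x2 where "x2 = g (q 2)"
    have "D g g = a 0 1 * (x0-x1)^2 + a 0 2 * (x0-x2)^2 + a 1 2 * (x1-x2)^2"
      using e unfolding x0_def x1_def x2_def by simp
    also have "\<dots> \<le> ?S * ((x0-x1)^2 + (x0-x2)^2 + (x1-x2)^2)"
    proof -
      have "a 0 1 * (x0-x1)^2 \<le> ?S * (x0-x1)^2" using p by (intro mult_right_mono) auto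
      moreover have "a 0 2 * (x0-x2)^2 \<le> ?S * (x0-x2)^2" using p by (intro mult_right_mono) auto
      moreover have "a 1 2 * (x1-x2)^2 \<le> ?S * (x1-x2)^2" using p by (intro mult_right_mono) auto
      ultimately show ?thesis by (simp add: distrib_left)
    qed
    also have "\<dots> \<le> ?S * (K * (b 0 1*(x0-x1)^2 + b 0 2*(x0-x2)^2 + b 1 2*(x1-x2)^2))"
      using Kb p by (intro mult_left_mono) auto
    also have "\<dots> = ?S * K * D' g g"
      using e' unfolding x0_def x1_def x2_def by simp
    finally show "D g g \<le> ?S * K * D' g g" .
  qed
qed

lemma rho_pos: "rho > 0"
proof -
  have "sqrt 5 > sqrt 1" by (subst real_sqrt_less_iff) simp
  then show ?thesis unfolding rho_def by simp
qed

lemma half: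
  assumes r: "r > 0" and DM: "D \<in> M" and DM': "D' \<in> M" and l: "lam > 0" and l': "lam' > 0"
    and E: "\<forall>u. RR W r D u = ereal (lam * D u u)"
    and E': "\<forall>u. RR W r D' u = ereal (lam' * D' u u)"
  shows "lam \<le> lam'"
proof -
  obtain K where K: "K > 0" and KD: "\<forall>g. D g g \<le> K * D' g g" using M_equiv[OF DM DM'] by blast
  define t where "t = lam' / lam"
  have tpos: "t > 0" using l l' unfolding t_def by simp
  have it: "\<forall>g. D g g \<le> K * t^n * D' g g" for n
  proof (induction n)
    case 0 then show ?case using KD by simp
  next
    case (Suc n)
    show ?case
    proof
      fix u
      have "lam * D u u \<le> K * t^n * (lam' * D' u u)"
        by (rule mono_RR[OF r _ _ Suc E[rule_format] E'[rule_format]])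
           (use M_nonneg[OF DM] K tpos in auto)
      then have "D u u \<le> K * t^n * (lam' * D' u u) / lam" using l by (simp add: field_simps)
      also have "\<dots> = K * t^Suc n * D' u u" unfolding t_def using l by (simp add: field_simps)
      finally show "D u u \<le> K * t^Suc n * D' u u" .
    qed
  qed
  obtain u where u: "D u u > 0" using M_pos[OF DM] by blast
  have d': "D' u u > 0"
  proof (rule ccontr)
    assume "\<not> D' u u > 0"
    then have "K * t^0 * D' u u \<le> 0" using K by (simp add: mult_nonpos_nonneg mult_le_0_iff)
    then show False using spec[OF it[of 0], of u] u by simp
  qed
  show ?thesis
  proof (rule ccontr)
    assume "\<not> lam \<le> lam'"
    then have "t < 1" unfolding t_def using l l' by simp
    then obtain n where n: "t^n < D u u / (K * D' u u)"
      using real_arch_pow_inv[of "D u u / (K * D' u u)" t] u d' K by auto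
    then have "K * t^n * D' u u < D u u" using K d' by (simp add: field_simps)
    then show False using spec[OF it[of n], of u] by simp
  qed
qed

theorem lemma5p2:
  fixes r lam lam' :: real and W1 :: "nat list set"
    and D D' :: "(complex \<Rightarrow> real) \<Rightarrow> (complex \<Rightarrow> real) \<Rightarrow> real"
  assumes "rho < r" and "r < 1"
    and "is_W1 W1"
    and "D \<in> M" and "D' \<in> M"
    and "lam > 0" and "lam' > 0"
    and "\<forall>u. RR W1 r D u = ereal (lam * D u u)"
    and "\<forall>u. RR W1 r D' u = ereal (lam' * D' u u)"
  shows "lam = lam'"
proof -
  have r: "r > 0" using assms(1) rho_pos by simp
  have "lam \<le> lam'" by (rule half[OF r assms(4,5,6,7,8,9)])
  moreover have "lam' \<le> lam" by (rule half[OF r assms(5,4,7,6,9,8)])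
  ultimately show ?thesis by simp
qed

end
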